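(* Let $\Gamma$ be a countable discrete group and $\mu$ a probability measure on $\Gamma$ with $\mu(e)>0$. If $0\neq T\in\mathcal B(\ell^2(\Gamma))$ and $\lambda\in\mathbb T$ satisfy $\mathcal P_\mu(T)=\lambda T$, then $\lambda=1$.
   Context: $\rho$ denotes the right regular representation of $\Gamma$ on $\ell^2(\Gamma)$, $\rho_g\delta_x=\delta_{xg^{-1}}$. The Markov operator $\mathcal P_\mu:\mathcal B(\ell^2(\Gamma))\to\mathcal B(\ell^2(\Gamma))$ is $\mathcal P_\mu(T)=\sum_{g\in\Gamma}\mu(g)\rho_gT\rho_g^*$. *)

theory Defs
  imports "HOL-Analysis.Analysis"
begin

text \<open>The group \<Gamma> is a type of class group_add (written additively, not necessarily
  commutative; identity 0) and countable.\<close>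

definition ell2 :: "('g \<Rightarrow> complex) set" where
  "ell2 = {f. (\<lambda>x. (cmod (f x))\<^sup>2) summable_on UNIV}"

definition ell2_norm :: "('g \<Rightarrow> complex) \<Rightarrow> real" where
  "ell2_norm f = sqrt (\<Sum>\<^sub>\<infinity>x. (cmod (f x))\<^sup>2)"

definition bounded_op :: "(('g \<Rightarrow> complex) \<Rightarrow> ('g \<Rightarrow> complex)) \<Rightarrow> bool" where
  "bounded_op T \<longleftrightarrow>
     (\<forall>f\<in>ell2. T f \<in> ell2) \<and>
     (\<forall>f\<in>ell2. \<forall>h\<in>ell2. \<forall>a::complex. T (\<lambda>x. a * f x + h x) = (\<lambda>x. a * T f x + T h x)) \<and>
     (\<exists>K. \<forall>f\<in>ell2. ell2_norm (T f) \<le> K * ell2_norm f)"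

text \<open>Right regular representation: (\<rho>_g f)(x) = f(x g), so \<rho>_g \<delta>_x = \<delta>_{x g^{-1}};
  its adjoint is \<rho>_{g^{-1}}.\<close>

definition rho :: "'g::group_add \<Rightarrow> ('g \<Rightarrow> complex) \<Rightarrow> ('g \<Rightarrow> complex)" where
  "rho g f = (\<lambda>x. f (x + g))"

text \<open>Markov operator P_\<mu>(T) = \<Sum>_g \<mu>(g) \<rho>_g T \<rho>_g^*, the sum taken in the strong operator
  topology (evaluated pointwise, which agrees with the l2-limit).\<close>

definition markov_op :: "('g::group_add \<Rightarrow> real) \<Rightarrow> (('g \<Rightarrow> complex) \<Rightarrow> ('g \<Rightarrow> complex))
    \<Rightarrow> ('g \<Rightarrow> complex) \<Rightarrow> ('g \<Rightarrow> complex)" where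
  "markov_op \<mu> T f = (\<lambda>x. \<Sum>\<^sub>\<infinity>g. complex_of_real (\<mu> g) * rho g (T (rho (- g) f)) x)"

end

theory Submission
  imports Defs
begin

lemma bij_plus_r: "bij_betw (\<lambda>x::'g::group_add. x + g) UNIV UNIV"
  by (rule bij_betw_byWitness[where f'="\<lambda>x. x - g"]) (auto simp: algebra_simps)

lemma rho_ell2:
  assumes "f \<in> ell2"
  shows "rho g f \<in> ell2" "ell2_norm (rho g f) = ell2_norm f"
proof -
  have "(\<lambda>x. (cmod (f (x + g)))\<^sup>2) summable_on UNIV"
    using summable_on_reindex_bij_betw[OF bij_plus_r, of "\<lambda>x. (cmod (f x))\<^sup>2" g] assms
    by (simp add: ell2_def)
  then show "rho g f \<in> ell2" by (simp add: ell2_def rho_def)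
  show "ell2_norm (rho g f) = ell2_norm f"
    using infsum_reindex_bij_betw[OF bij_plus_r, of "\<lambda>x. (cmod (f x))\<^sup>2" g]
    by (simp add: ell2_norm_def rho_def)
qed

lemma point_le:
  assumes "f \<in> ell2"
  shows "cmod (f x) \<le> ell2_norm f"
proof -
  have s: "(\<lambda>x. (cmod (f x))\<^sup>2) summable_on UNIV" using assms by (simp add: ell2_def)
  have "(\<Sum>\<^sub>\<infinity>y\<in>{x}. (cmod (f y))\<^sup>2) \<le> (\<Sum>\<^sub>\<infinity>y. (cmod (f y))\<^sup>2)"
    by (rule infsum_mono2[OF _ s]) auto
  then have "(cmod (f x))\<^sup>2 \<le> (\<Sum>\<^sub>\<infinity>y. (cmod (f y))\<^sup>2)" by simp
  then show ?thesis unfolding ell2_norm_def by (simp add: real_le_rsqrt)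
qed

lemma scale_ell2:
  assumes "f \<in> ell2"
  shows "(\<lambda>x. c * f x) \<in> ell2" "ell2_norm (\<lambda>x. c * f x) = cmod c * ell2_norm f"
proof -
  have s: "(\<lambda>x. (cmod (f x))\<^sup>2) summable_on UNIV" using assms by (simp add: ell2_def)
  have e: "\<And>x. (cmod (c * f x))\<^sup>2 = (cmod c)\<^sup>2 * (cmod (f x))\<^sup>2"
    by (simp add: norm_mult power_mult_distrib)
  show "(\<lambda>x. c * f x) \<in> ell2" unfolding ell2_def using summable_on_cmult_right[OF s] e by simp
  have "(\<Sum>\<^sub>\<infinity>x. (cmod (c * f x))\<^sup>2) = (cmod c)\<^sup>2 * (\<Sum>\<^sub>\<infinity>x. (cmod (f x))\<^sup>2)"
    unfolding e by (rule infsum_cmult_right) (use s in auto)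
  then show "ell2_norm (\<lambda>x. c * f x) = cmod c * ell2_norm f"
    unfolding ell2_norm_def by (simp add: real_sqrt_mult)
qed

lemma circle_lemma:
  fixes lam :: complex and m :: real
  assumes "cmod lam = 1" "0 < m" "m \<le> 1" "cmod (lam - of_real m) \<le> 1 - m"
  shows "lam = 1"
proof -
  obtain a b where l: "lam = Complex a b" by (cases lam)
  have h1: "a\<^sup>2 + b\<^sup>2 = 1" using assms(1) l by (simp add: cmod_def)
  have "(cmod (lam - of_real m))\<^sup>2 \<le> (1 - m)\<^sup>2"
    using assms(4) by (simp add: power_mono)
  then have "(a - m)\<^sup>2 + b\<^sup>2 \<le> (1 - m)\<^sup>2" using l by (simp add: cmod_def)
  then have "m * a \<ge> m" using h1 by (simp add: power2_eq_square algebra_simps)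
  then have "a \<ge> 1" using assms(2) by simp
  moreover have "a\<^sup>2 \<le> 1" using h1 zero_le_power2[of b] by linarith
  moreover have "a\<^sup>2 \<ge> a" using \<open>a \<ge> 1\<close> by (simp add: power2_eq_square)
  ultimately have "a = 1" by linarith
  then have "b = 0" using h1 by simp
  then show ?thesis using l \<open>a = 1\<close> by (simp add: complex_eq_iff)
qed

theorem theorem2p2:
  fixes \<mu> :: "'g::{group_add, countable} \<Rightarrow> real"
    and T :: "('g \<Rightarrow> complex) \<Rightarrow> ('g \<Rightarrow> complex)"
    and lam :: complex
  assumes prob_nonneg: "\<And>g. \<mu> g \<ge> 0"
    and prob_sum: "(\<mu> has_sum 1) UNIV"
    and mu_e: "\<mu> 0 > 0"
    and T_bounded: "bounded_op T"
    and T_nonzero: "\<exists>f\<in>ell2. T f \<noteq> (\<lambda>_. 0)"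
    and lam_circle: "cmod lam = 1"
    and eigen: "\<forall>f\<in>ell2. markov_op \<mu> T f = (\<lambda>x. lam * T f x)"
  shows "lam = 1"
proof -
  have Tin: "\<And>f. f \<in> ell2 \<Longrightarrow> T f \<in> ell2" using T_bounded by (simp add: bounded_op_def)
  have Tlin: "\<And>f h a. f \<in> ell2 \<Longrightarrow> h \<in> ell2 \<Longrightarrow> T (\<lambda>x. a * f x + h x) = (\<lambda>x. a * T f x + T h x)"
    using T_bounded by (simp add: bounded_op_def)
  obtain K where K: "\<And>f. f \<in> ell2 \<Longrightarrow> ell2_norm (T f) \<le> K * ell2_norm f"
    using T_bounded unfolding bounded_op_def by blast
  have z_ell2: "(\<lambda>_. 0) \<in> (ell2 :: ('g \<Rightarrow> complex) set)" by (simp add: ell2_def)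
  have T0: "T (\<lambda>_. 0) = (\<lambda>_. 0)"
  proof -
    have "T (\<lambda>x. 1 * (0::complex) + 0) = (\<lambda>x. 1 * T (\<lambda>_. 0) x + T (\<lambda>_. 0) x)"
      using Tlin[OF z_ell2 z_ell2, of 1] .
    then have "\<And>x. T (\<lambda>_. 0) x = T (\<lambda>_. 0) x + T (\<lambda>_. 0) x" by (metis fun_cong add_0 mult_1)
    then show ?thesis by auto
  qed
  have Tscale: "\<And>f c. f \<in> ell2 \<Longrightarrow> T (\<lambda>x. c * f x) = (\<lambda>x. c * T f x)"
    using Tlin[OF _ z_ell2] T0 by simp
  define S where "S = {cmod (T f x) | f x. f \<in> ell2 \<and> ell2_norm f \<le> 1}"
  define M where "M = Sup S"
  have Sbdd: "bdd_above S"
  proof (rule bdd_aboveI[where M="max K 0"])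
    fix y assume "y \<in> S"
    then obtain f x where y: "y = cmod (T f x)" "f \<in> ell2" "ell2_norm f \<le> 1"
      unfolding S_def by blast
    have n0: "ell2_norm f \<ge> 0" by (simp add: ell2_norm_def infsum_nonneg)
    have "y \<le> ell2_norm (T f)" using y point_le[OF Tin[OF y(2)]] by simp
    also have "\<dots> \<le> K * ell2_norm f" using K y by simp
    also have "\<dots> \<le> max K 0" using y(3) n0
      by (cases "K \<ge> 0") (auto simp: mult_left_le mult_nonpos_nonneg intro: order.trans[OF mult_nonpos_nonneg])
    finally show "y \<le> max K 0" .
  qed
  have SM: "\<And>f x. f \<in> ell2 \<Longrightarrow> ell2_norm f \<le> 1 \<Longrightarrow> cmod (T f x) \<le> M"
    unfolding M_def by (rule cSup_upper[OF _ Sbdd]) (auto simp: S_def)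
  have Sne: "S \<noteq> {}"
  proof -
    have "ell2_norm (\<lambda>_::'g. 0::complex) \<le> 1" by (simp add: ell2_norm_def)
    then have "cmod (T (\<lambda>_. 0) 0) \<in> S" using z_ell2 unfolding S_def by blast
    then show ?thesis by blast
  qed
  obtain f0 where f0: "f0 \<in> ell2" "T f0 \<noteq> (\<lambda>_. 0)" using T_nonzero by blast
  then obtain x0 where x0: "T f0 x0 \<noteq> 0" by auto
  have n0pos: "ell2_norm f0 > 0"
  proof -
    have "ell2_norm f0 \<ge> 0" by (simp add: ell2_norm_def infsum_nonneg)
    moreover have "ell2_norm f0 \<noteq> 0"
    proof
      assume "ell2_norm f0 = 0"
      then have "\<And>x. f0 x = 0" using point_le[OF f0(1)] by (metis norm_le_zero_iff order_refl)
      then have "f0 = (\<lambda>_. 0)" by auto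
      then show False using f0 T0 by simp
    qed
    ultimately show ?thesis by linarith
  qed
  define c where "c = complex_of_real (1 / ell2_norm f0)"
  have Mpos: "M > 0"
  proof -
    have "ell2_norm (\<lambda>x. c * f0 x) = cmod c * ell2_norm f0" by (rule scale_ell2(2)[OF f0(1)])
    also have "\<dots> = 1" using n0pos by (simp add: c_def norm_divide)
    finally have "ell2_norm (\<lambda>x. c * f0 x) = 1" .
    then have "cmod (T (\<lambda>x. c * f0 x) x0) \<le> M" using SM scale_ell2(1)[OF f0(1)] by simp
    moreover have "cmod (T (\<lambda>x. c * f0 x) x0) > 0"
    proof -
      have "c \<noteq> 0" using n0pos by (simp add: c_def)
      then show ?thesis using Tscale[OF f0(1), of c] x0 by simp
    qed
    ultimately show ?thesis by linarith
  qed
  have musum: "\<mu> summable_on UNIV" using prob_sum by (auto simp: summable_on_def)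
  have mus1: "(\<Sum>\<^sub>\<infinity>g. \<mu> g) = 1" using prob_sum by (simp add: infsumI)
  have musD: "\<mu> summable_on (UNIV - {0})" by (rule summable_on_subset[OF musum]) auto
  have musD1: "(\<Sum>\<^sub>\<infinity>g\<in>UNIV-{0}. \<mu> g) = 1 - \<mu> 0"
    using infsum_insert[OF musD, of 0] mus1 by (simp add: insert_absorb)
  have est: "cmod (lam - of_real (\<mu> 0)) * cmod (T f x) \<le> (1 - \<mu> 0) * M"
    if f: "f \<in> ell2" "ell2_norm f \<le> 1" for f x
  proof -
    define a where "a = (\<lambda>g. complex_of_real (\<mu> g) * rho g (T (rho (- g) f)) x)"
    have abnd: "cmod (a g) \<le> \<mu> g * M" for g
    proof -
      have "cmod (T (rho (- g) f) (x + g)) \<le> M"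
        using SM rho_ell2[OF f(1), of "-g"] f(2) by simp
      then show ?thesis unfolding a_def rho_def using prob_nonneg[of g]
        by (simp add: norm_mult mult_left_mono)
    qed
    have mM: "(\<lambda>g. \<mu> g * M) summable_on UNIV"
      using summable_on_cmult_left[OF musum, of M] by simp
    have aabs: "(\<lambda>g. norm (a g)) summable_on UNIV"
      by (rule summable_on_comparison_test[OF mM]) (use abnd in auto)
    have asum: "a summable_on UNIV" using abs_summable_summable[OF aabs] .
    have asumD: "a summable_on (UNIV - {0})" by (rule summable_on_subset[OF asum]) auto
    have "lam * T f x = infsum a UNIV"
    proof -
      have "markov_op \<mu> T f x = lam * T f x" using eigen f(1) by simp
      then show ?thesis unfolding markov_op_def a_def by simp
    qed
    also have "\<dots> = a 0 + infsum a (UNIV - {0})"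
      using infsum_insert[OF asumD, of 0] by (simp add: insert_absorb)
    also have "a 0 = of_real (\<mu> 0) * T f x" by (simp add: a_def rho_def)
    finally have eq: "(lam - of_real (\<mu> 0)) * T f x = infsum a (UNIV - {0})"
      by (simp add: algebra_simps)
    have "cmod (infsum a (UNIV - {0})) \<le> (\<Sum>\<^sub>\<infinity>g\<in>UNIV-{0}. cmod (a g))"
      by (rule norm_infsum_bound) (rule summable_on_subset[OF aabs], auto)
    also have "\<dots> \<le> (\<Sum>\<^sub>\<infinity>g\<in>UNIV-{0}. \<mu> g * M)"
      by (rule infsum_mono) (auto intro: summable_on_subset[OF aabs] summable_on_subset[OF mM] abnd)
    also have "\<dots> = (1 - \<mu> 0) * M"
      using infsum_cmult_left[of M \<mu> "UNIV - {0}"] musD musD1 by simp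
    finally have "cmod (infsum a (UNIV - {0})) \<le> (1 - \<mu> 0) * M" .
    then show ?thesis unfolding eq[symmetric] norm_mult .
  qed
  have "cmod (lam - of_real (\<mu> 0)) * M \<le> (1 - \<mu> 0) * M"
  proof (cases "lam = of_real (\<mu> 0)")
    case True
    have "\<mu> 0 \<le> 1" using musD1 infsum_nonneg[of "UNIV - {0}" \<mu>] prob_nonneg by simp
    then show ?thesis using True Mpos by simp
  next
    case False
    then have pos: "cmod (lam - of_real (\<mu> 0)) > 0" by simp
    have "M \<le> (1 - \<mu> 0) * M / cmod (lam - of_real (\<mu> 0))"
      unfolding M_def
    proof (rule cSup_least[OF Sne])
      fix y assume "y \<in> S"
      then obtain f x where y: "y = cmod (T f x)" "f \<in> ell2" "ell2_norm f \<le> 1"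
        unfolding S_def by blast
      show "y \<le> (1 - \<mu> 0) * Sup S / cmod (lam - of_real (\<mu> 0))"
        using est[OF y(2,3), of x] pos y(1) unfolding M_def
        by (simp add: pos_le_divide_eq mult.commute)
    qed
    then show ?thesis using pos by (simp add: pos_le_divide_eq mult.commute)
  qed
  then have "cmod (lam - of_real (\<mu> 0)) \<le> 1 - \<mu> 0" using Mpos by simp
  moreover have "\<mu> 0 \<le> 1" using musD1 infsum_nonneg[of "UNIV - {0}" \<mu>] prob_nonneg by simp
  ultimately show ?thesis using circle_lemma lam_circle mu_e by blast
qed

end
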